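(* Assume the law of excluded middle. If $\alpha\in\mathrm{ord}$ is bounded, i.e. $\alpha\le\underline m$ for some $m\in\mathbb N$, then $\alpha$ is finite, i.e. $\alpha=_{\mathrm{Ord}}\underline n$ for some $n\in\mathbb N$.
   Context: Let $\mathfrak F$ be a set of index sets such that: $\mathbb N$ and each $\mathbb N_k=\{n\in\mathbb N:n<k\}$ ($k\ge 0$) belong to $\mathfrak F$; every finitely enumerated subset of an element of $\mathfrak F$ is isomorphic to an element of $\mathfrak F$; for $J\in\mathfrak F$ the set of finitely enumerated subsets of $J$ is isomorphic to an element of $\mathfrak F$; $\mathfrak F$ is stable under disjoint unions indexed by elements of $\mathfrak F$. A finitely enumerated subset of $A$ is one given by a map $\mathbb N_k\to A$; write $F\subseteq_f I$. The set $\mathrm{ord}$ is inductively generated by $\underline 0$ and, for every family $(\alpha_i)_{i\in I}$ with $I\in\mathfrak F$, $\alpha_i\in\mathrm{ord}$, an element $\mathrm S(\alpha_i)_{i\in I}$; for such $\alpha$, $I_\alpha=I$ and $\alpha_i$ are its definitional subordinals; $I_{\underline 0}=\emptyset$. $\mathrm{succ}(\beta)$ is $\mathrm S$ of the one-element family $(\beta)$, and $\underline{m+1}=\mathrm{succ}(\underline m)$. For a finite list $F$ in $I_\alpha$, $\alpha_F$ is the list of the $\alpha_i$, $i\in F$. Relations between an element and a nonempty finite list, by simultaneous induction: $\alpha\le\beta^1,\dots,\beta^m$ means $\alpha_i<\beta^1,\dots,\beta^m$ for all $i\in I_\alpha$; $\alpha<\beta^1,\dots,\beta^m$ means there exist $F_1\subseteq_f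 I_{\beta^1},\dots,F_m\subseteq_f I_{\beta^m}$, not all empty, with $\alpha\le\beta^1_{F_1},\dots,\beta^m_{F_m}$ (concatenated list). $\alpha=_{\mathrm{Ord}}\beta$ means $\alpha\le\beta$ and $\beta\le\alpha$. *)

theory Defs
  imports Main "HOL-Library.Infinite_Typeclass"
begin

text \<open>Generalised ordinals: \<open>S I f\<close> is the supremum-successor of the family
  \<open>(f i)\<^sub>i\<^sub>\<in>\<^sub>I\<close>; index sets are subsets of the (infinite) index type \<open>'i\<close>.
  Values of \<open>f\<close> outside \<open>I\<close> are irrelevant.\<close>
datatype 'i ord = Zero | S "'i set" "'i \<Rightarrow> 'i ord"

primrec idx :: "'i ord \<Rightarrow> 'i set" where
  "idx Zero = {}"
| "idx (S I f) = I"

primrec sub :: "'i ord \<Rightarrow> 'i \<Rightarrow> 'i ord" where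
  "sub Zero i = Zero"
| "sub (S I f) i = f i"

definition sublist_of :: "'i ord list \<Rightarrow> 'i list list \<Rightarrow> 'i ord list" where
  "sublist_of bs Fs = concat (map (\<lambda>(b, F). map (sub b) F) (zip bs Fs))"

text \<open>Admissible choices \<open>F\<^sub>1 \<subseteq>\<^sub>f I\<^sub>\<beta>\<^sub>1, ..., F\<^sub>m \<subseteq>\<^sub>f I\<^sub>\<beta>\<^sub>m\<close>, not all empty
  (finitely enumerated subsets are lists).\<close>
definition admissible :: "'i ord list \<Rightarrow> 'i list list \<Rightarrow> bool" where
  "admissible bs Fs \<longleftrightarrow> length Fs = length bs \<and>
     (\<forall>j<length bs. set (Fs ! j) \<subseteq> idx (bs ! j)) \<and> (\<exists>j<length bs. Fs ! j \<noteq> [])"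

text \<open>\<open>\<alpha> \<le> \<beta>s\<close>, with \<open>\<alpha>\<^sub>i < \<beta>s\<close> unfolded inline.\<close>
primrec ord_le :: "'i ord \<Rightarrow> 'i ord list \<Rightarrow> bool" where
  "ord_le Zero bs = True"
| "ord_le (S I f) bs =
     (\<forall>i\<in>I. \<exists>Fs. admissible bs Fs \<and> ord_le (f i) (sublist_of bs Fs))"

definition ord_lt :: "'i ord \<Rightarrow> 'i ord list \<Rightarrow> bool" where
  "ord_lt a bs \<longleftrightarrow> (\<exists>Fs. admissible bs Fs \<and> ord_le a (sublist_of bs Fs))"

definition ord_eq :: "'i ord \<Rightarrow> 'i ord \<Rightarrow> bool" where
  "ord_eq a b \<longleftrightarrow> ord_le a [b] \<and> ord_le b [a]"

definition succ :: "'i ord \<Rightarrow> 'i ord" where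
  "succ b = S {undefined} (\<lambda>_. b)"

primrec nat_ord :: "nat \<Rightarrow> 'i ord" where
  "nat_ord 0 = Zero"
| "nat_ord (Suc m) = succ (nat_ord m)"

end

theory Submission
  imports Defs
begin

primrec hle :: "'i ord \<Rightarrow> nat \<Rightarrow> bool" where
  "hle Zero m = True"
| "hle (S I f) m = (\<forall>i\<in>I. 0 < m \<and> hle (f i) (m - 1))"

lemma concat_rep: "concat (map (\<lambda>F. replicate (length F) x) Fs) = replicate (sum_list (map length Fs)) x"
  by (induction Fs) (auto simp: replicate_add)

lemma sub_succ: "sub (nat_ord (Suc k)) i = nat_ord k"
  by (simp add: succ_def)

lemma idx_succ: "idx (nat_ord (Suc k)) = {undefined}"
  by (simp add: succ_def)

lemma map_sub_succ: "map (sub (nat_ord (Suc k))) F = replicate (length F) (nat_ord k)"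
  by (induction F) (simp_all add: succ_def)

lemma sublist_rep:
  assumes "length Fs = n"
  shows "sublist_of (replicate n (nat_ord (Suc k))) Fs = replicate (sum_list (map length Fs)) (nat_ord k)"
proof -
  have "map (\<lambda>(b, F). map (sub b) F) (zip (replicate n (nat_ord (Suc k))) Fs)
      = map (\<lambda>F. replicate (length F) (nat_ord k)) Fs"
    using assms by (induction Fs arbitrary: n) (auto simp: map_sub_succ Suc_length_conv simp del: nat_ord.simps)
  then show ?thesis unfolding sublist_of_def by (simp add: concat_rep)
qed

lemma adm_C:
  assumes "admissible (replicate n (nat_ord k)) Fs"
  shows "0 < k \<and> sublist_of (replicate n (nat_ord k)) Fs = replicate (sum_list (map length Fs)) (nat_ord (k-1))
     \<and> 0 < sum_list (map length Fs)"
proof -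
  from assms have L: "length Fs = n" and sub: "\<forall>j<n. set (Fs ! j) \<subseteq> idx (nat_ord k)"
    and ne: "\<exists>j<n. Fs ! j \<noteq> []" by (auto simp: admissible_def)
  then obtain j where j: "j < n" "Fs ! j \<noteq> []" by blast
  have k: "0 < k"
  proof (rule ccontr)
    assume "\<not> 0 < k"
    then have "k = 0" by simp
    with sub j show False by auto
  qed
  then obtain k' where k': "k = Suc k'" using not0_implies_Suc by blast
  have "length (Fs ! j) \<le> sum_list (map length Fs)"
    using j L by (metis elem_le_sum_list length_map nth_map)
  moreover have "0 < length (Fs ! j)" using j by simp
  ultimately have "0 < sum_list (map length Fs)" by linarith
  then show ?thesis using k k' sublist_rep[OF L] by simp
qed

lemma adm_D:
  assumes "0 < n" "0 < k"
  shows "admissible (replicate n (nat_ord k)) (replicate n [undefined])"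
  using assms by (cases k) (auto simp: admissible_def succ_def)

lemma A: "0 < n \<Longrightarrow> ord_le a (replicate n (nat_ord k)) = hle a k"
proof (induction a arbitrary: n k)
  case Zero
  then show ?case by simp
next
  case (S I f)
  show ?case
  proof
    assume H: "ord_le (S I f) (replicate n (nat_ord k))"
    show "hle (S I f) k"
    proof (unfold hle.simps, intro ballI)
      fix i assume i: "i \<in> I"
      with H obtain Fs where Fs: "admissible (replicate n (nat_ord k)) Fs"
        "ord_le (f i) (sublist_of (replicate n (nat_ord k)) Fs)" by auto
      from adm_C[OF Fs(1)] Fs(2) S.IH[of "f i" "sum_list (map length Fs)" "k-1"]
      show "0 < k \<and> hle (f i) (k - 1)" by auto
    qed
  next
    assume H: "hle (S I f) k"
    show "ord_le (S I f) (replicate n (nat_ord k))"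
    proof (unfold ord_le.simps, intro ballI)
      fix i assume i: "i \<in> I"
      with H have k: "0 < k" and h: "hle (f i) (k-1)" by auto
      have adm: "admissible (replicate n (nat_ord k)) (replicate n [undefined])"
        using adm_D[OF S.prems k] .
      have sl: "sum_list (map length (replicate n [undefined])) = n" by (simp add: sum_list_replicate)
      from adm_C[OF adm] sl have eq: "sublist_of (replicate n (nat_ord k)) (replicate n [undefined]) = replicate n (nat_ord (k-1))"
        by metis
      have ih: "ord_le (f i) (replicate n (nat_ord (k - 1)))"
        using S.IH[of "f i" n "k-1"] S.prems h by simp
      show "\<exists>Fs. admissible (replicate n (nat_ord k)) Fs \<and> ord_le (f i) (sublist_of (replicate n (nat_ord k)) Fs)"
        using adm eq ih by metis
    qed
  qed
qed

lemma B: "\<not> hle a k \<Longrightarrow> ord_le (nat_ord (Suc k)) [a]"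
proof (induction k arbitrary: a)
  case 0
  then obtain I f i where a: "a = S I f" "i \<in> I" by (cases a) auto
  have "admissible [a] [[i]]" using a by (auto simp: admissible_def)
  then show ?case by (auto simp: succ_def)
next
  case (Suc k)
  then obtain I f i where a: "a = S I f" "i \<in> I" "\<not> hle (f i) k" by (cases a) auto
  have "admissible [a] [[i]]" using a by (auto simp: admissible_def)
  moreover have "sublist_of [a] [[i]] = [f i]" using a by (simp add: sublist_of_def)
  moreover have "ord_le (nat_ord (Suc (Suc k))) [a] = (\<exists>Fs. admissible [a] Fs \<and> ord_le (nat_ord (Suc k)) (sublist_of [a] Fs))"
    by (simp only: nat_ord.simps(2)[of "Suc k"] succ_def ord_le.simps) simp
  ultimately show ?case using Suc.IH[OF a(3)] by metis
qed

theorem corollary3p21: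
  fixes \<alpha> :: "'i::infinite ord"
  assumes "\<exists>m. ord_le \<alpha> [nat_ord m]"
  shows "\<exists>n. ord_eq \<alpha> (nat_ord n)"
proof -
  have A1: "ord_le a [nat_ord k] = hle a k" for a :: "'i ord" and k
    using A[of 1 a k] by simp
  from assms obtain m where "hle \<alpha> m" using A1 by blast
  define n where "n = (LEAST n. hle \<alpha> n)"
  have hn: "hle \<alpha> n" unfolding n_def by (rule LeastI) fact
  have "ord_le (nat_ord n) [\<alpha>]"
  proof (cases n)
    case 0 then show ?thesis by simp
  next
    case (Suc k)
    then have "\<not> hle \<alpha> k" using Least_le[of "hle \<alpha>" k] unfolding n_def by auto
    then show ?thesis using B Suc by blast
  qed
  then show ?thesis using hn A1 by (auto simp: ord_eq_def)
qed

end
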